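(* Assume the standing setting below. Let $\alpha\in(0,1/6]$ with $\alpha n$ an integer, let $P_1\subseteq X$ with $|P_1|=\alpha n$, and let $T_\alpha\subseteq X$ be any nonempty set. Let $\mathcal{B}_a$ be a $(\phi_\alpha/15)$-linear bin division of $X$ with respect to $\mathrm{OPT}$. Suppose $n\ge\phi_\alpha/15$, that $\mathcal{B}_a$ is well-represented in $P_1$ for $X$, and that for every $i$ with $|C_i^*|\ge\phi_\alpha$, $C_i^*$ is well-represented in $P_1$ for $X$. Then $$R(X^\alpha_{\mathrm{large}},T_\alpha)\le R(X^\alpha_{\mathrm{large}},\mathrm{OPT})+\frac4\alpha\Big(R(P_1\setminus\mathcal{B}_a(1),\mathrm{OPT})+R(P_1,T_\alpha)\Big).$$
   Context: Standing setting: $(X,\rho)$ is a finite metric space with $|X|=n$; $k\ge 2$ is an integer and $\delta\in(0,1)$; $\log$ is the natural logarithm. For nonempty $T\subseteq X$, $\rho(x,T):=\min_{y\in T}\rho(x,y)$ and $R(S,T):=\sum_{x\in S}\rho(x,T)$; ties in minimizations are broken by a fixed ordering. $\mathrm{OPT}=\{c_1^*,\ldots,c_k^*\}$ is a set of at most $k$ points of $X$ minimizing $R(X,\cdot)$, and $C_i^*:=\{x\in X: i=\arg\min_{j\in[k]}\rho(c_j^*,x)\}$. For $\alpha>0$, $\phi_\alpha:=150\log(32k/\delta)/\alpha$; $X^\alpha_{\mathrm{large}}:=\bigcup\{C_i^*: |C_i^*|\ge\phi_\alpha\}$. For finite $W$, $A,B\subseteq W$, $B$ is well-represented in $A$ for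 $W$ if $|B\cap A|/|B|\in[r/2,\frac32 r]$ with $r=|A|/|W|$; a bin division is well-represented if all its bins are. A $z$-linear bin division ($z>0$) of $W$ with respect to $T$ is a partition $(\mathcal{B}(1),\ldots,\mathcal{B}(L))$ of $W$ with: (1) if $z\le|W|$, $|\mathcal{B}(i)|\ge z(i+1)/2$ for all $i$; otherwise it is trivial, $\mathcal{B}(1):=W$; (2) $|\mathcal{B}(1)|\le\frac52 z$; (3) $|\mathcal{B}(i+1)|/|\mathcal{B}(i)|\le3/2$; (4) $\rho(x,T)\ge\rho(x',T)$ whenever $x\in\mathcal{B}(i)$, $x'\in\mathcal{B}(i+1)$. *)

theory Defs
  imports Complex_Main
begin

definition finite_metric :: "'a set \<Rightarrow> ('a \<Rightarrow> 'a \<Rightarrow> real) \<Rightarrow> bool" where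
  "finite_metric X \<rho> \<longleftrightarrow> finite X \<and>
     (\<forall>x\<in>X. \<forall>y\<in>X. \<rho> x y \<ge> 0 \<and> (\<rho> x y = 0 \<longleftrightarrow> x = y) \<and> \<rho> x y = \<rho> y x) \<and>
     (\<forall>x\<in>X. \<forall>y\<in>X. \<forall>z\<in>X. \<rho> x z \<le> \<rho> x y + \<rho> y z)"

definition dist_set :: "('a \<Rightarrow> 'a \<Rightarrow> real) \<Rightarrow> 'a \<Rightarrow> 'a set \<Rightarrow> real" where
  "dist_set \<rho> x T = Min ((\<lambda>y. \<rho> x y) ` T)"

definition Rcost :: "('a \<Rightarrow> 'a \<Rightarrow> real) \<Rightarrow> 'a set \<Rightarrow> 'a set \<Rightarrow> real" where
  "Rcost \<rho> S T = (\<Sum>x\<in>S. dist_set \<rho> x T)"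

definition is_opt :: "'a set \<Rightarrow> ('a \<Rightarrow> 'a \<Rightarrow> real) \<Rightarrow> nat \<Rightarrow> (nat \<Rightarrow> 'a) \<Rightarrow> bool" where
  "is_opt X \<rho> k c \<longleftrightarrow> c ` {1..k} \<subseteq> X \<and>
     (\<forall>T. T \<subseteq> X \<and> T \<noteq> {} \<and> card T \<le> k \<longrightarrow> Rcost \<rho> X (c ` {1..k}) \<le> Rcost \<rho> X T)"

text \<open>C_i^*: points whose argmin_j rho(c_j, x) is i (ties broken towards the smallest index).\<close>
definition opt_cluster :: "'a set \<Rightarrow> ('a \<Rightarrow> 'a \<Rightarrow> real) \<Rightarrow> nat \<Rightarrow> (nat \<Rightarrow> 'a) \<Rightarrow> nat \<Rightarrow> 'a set" where
  "opt_cluster X \<rho> k c i =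
     {x \<in> X. i = (LEAST j. j \<in> {1..k} \<and> (\<forall>j'\<in>{1..k}. \<rho> (c j) x \<le> \<rho> (c j') x))}"

definition phi :: "nat \<Rightarrow> real \<Rightarrow> real \<Rightarrow> real" where
  "phi k \<delta> \<alpha> = 150 * ln (32 * real k / \<delta>) / \<alpha>"

definition X_large :: "'a set \<Rightarrow> ('a \<Rightarrow> 'a \<Rightarrow> real) \<Rightarrow> nat \<Rightarrow> (nat \<Rightarrow> 'a) \<Rightarrow> real \<Rightarrow> real \<Rightarrow> 'a set" where
  "X_large X \<rho> k c \<delta> \<alpha> =
     \<Union> {opt_cluster X \<rho> k c i | i. i \<in> {1..k} \<and> real (card (opt_cluster X \<rho> k c i)) \<ge> phi k \<delta> \<alpha>}"

definition well_rep :: "'a set \<Rightarrow> 'a set \<Rightarrow> 'a set \<Rightarrow> bool" where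
  "well_rep W A B \<longleftrightarrow>
     (let r = real (card A) / real (card W)
      in r / 2 \<le> real (card (B \<inter> A)) / real (card B) \<and>
         real (card (B \<inter> A)) / real (card B) \<le> 3 / 2 * r)"

definition well_rep_bins :: "'a set \<Rightarrow> 'a set \<Rightarrow> nat \<Rightarrow> (nat \<Rightarrow> 'a set) \<Rightarrow> bool" where
  "well_rep_bins W A L B \<longleftrightarrow> (\<forall>i\<in>{1..L}. well_rep W A (B i))"

definition linear_bin_division ::
  "('a \<Rightarrow> 'a \<Rightarrow> real) \<Rightarrow> real \<Rightarrow> 'a set \<Rightarrow> 'a set \<Rightarrow> nat \<Rightarrow> (nat \<Rightarrow> 'a set) \<Rightarrow> bool" where
  "linear_bin_division \<rho> z W T L B \<longleftrightarrow>
     L \<ge> 1 \<and>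
     (\<Union>i\<in>{1..L}. B i) = W \<and>
     (\<forall>i\<in>{1..L}. B i \<noteq> {}) \<and>
     (\<forall>i\<in>{1..L}. \<forall>j\<in>{1..L}. i \<noteq> j \<longrightarrow> B i \<inter> B j = {}) \<and>
     (if z \<le> real (card W)
      then (\<forall>i\<in>{1..L}. real (card (B i)) \<ge> z * (real i + 1) / 2)
      else L = 1 \<and> B 1 = W) \<and>
     real (card (B 1)) \<le> 5 / 2 * z \<and>
     (\<forall>i\<in>{1..<L}. real (card (B (i + 1))) / real (card (B i)) \<le> 3 / 2) \<and>
     (\<forall>i\<in>{1..<L}. \<forall>x\<in>B i. \<forall>x'\<in>B (i + 1). dist_set \<rho> x T \<ge> dist_set \<rho> x' T)"

end

theory Submission
  imports Defs
begin

lemma ds_le: "finite T \<Longrightarrow> y \<in> T \<Longrightarrow> dist_set \<rho> x T \<le> \<rho> x y"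
  unfolding dist_set_def by (rule Min_le) auto

lemma ds_in: "finite T \<Longrightarrow> T \<noteq> {} \<Longrightarrow> \<exists>y\<in>T. dist_set \<rho> x T = \<rho> x y"
proof -
  assume a: "finite T" "T \<noteq> {}"
  have "Min ((\<lambda>y. \<rho> x y) ` T) \<in> (\<lambda>y. \<rho> x y) ` T" using a by (intro Min_in) auto
  thus ?thesis unfolding dist_set_def by auto
qed

lemma ds_nonneg:
  assumes "finite_metric X \<rho>" "x \<in> X" "T \<subseteq> X" "T \<noteq> {}"
  shows "dist_set \<rho> x T \<ge> 0"
proof -
  have "finite T" using assms finite_metric_def finite_subset by metis
  then obtain y where "y \<in> T" "dist_set \<rho> x T = \<rho> x y" using ds_in assms by metis
  thus ?thesis using assms unfolding finite_metric_def by auto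
qed

lemma ds_tri:
  assumes "finite_metric X \<rho>" "x \<in> X" "y \<in> X" "T \<subseteq> X" "T \<noteq> {}"
  shows "dist_set \<rho> x T \<le> \<rho> x y + dist_set \<rho> y T"
proof -
  have fT: "finite T" using assms finite_metric_def finite_subset by metis
  then obtain t where t: "t \<in> T" "dist_set \<rho> y T = \<rho> y t" using ds_in assms by metis
  have "dist_set \<rho> x T \<le> \<rho> x t" using ds_le fT t by metis
  also have "\<dots> \<le> \<rho> x y + \<rho> y t" using assms t unfolding finite_metric_def by blast
  finally show ?thesis using t by simp
qed

lemma cluster_ds:
  assumes m: "finite_metric X \<rho>" and cX: "c ` {1..k} \<subseteq> X" and k: "k \<ge> 1"
    and x: "x \<in> opt_cluster X \<rho> k c i"
  shows "dist_set \<rho> x (c ` {1..k}) = \<rho> x (c i)" and "i \<in> {1..k}"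
proof -
  have xX: "x \<in> X" and iL: "i = (LEAST j. j \<in> {1..k} \<and> (\<forall>j'\<in>{1..k}. \<rho> (c j) x \<le> \<rho> (c j') x))"
    using x unfolding opt_cluster_def by auto
  have fin: "finite (c ` {1..k})" by simp
  have ne: "c ` {1..k} \<noteq> {}" using k by auto
  obtain y where y: "y \<in> c ` {1..k}" "dist_set \<rho> x (c ` {1..k}) = \<rho> x y"
    using ds_in[OF fin ne] by metis
  then obtain j0 where j0: "j0 \<in> {1..k}" "y = c j0" by auto
  have sym: "\<rho> a b = \<rho> b a" if "a \<in> X" "b \<in> X" for a b
    using m that unfolding finite_metric_def by blast
  have "\<forall>j'\<in>{1..k}. \<rho> (c j0) x \<le> \<rho> (c j') x"
  proof
    fix j' assume j': "j' \<in> {1..k}"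
    have cj0: "c j0 \<in> X" using cX j0 by auto
    have "\<rho> (c j0) x = dist_set \<rho> x (c ` {1..k})" using y j0 sym[OF cj0 xX] by simp
    also have "\<dots> \<le> \<rho> x (c j')" using ds_le[OF fin] j' by auto
    also have "\<dots> = \<rho> (c j') x" using sym[of x "c j'"] cX xX j' by (metis image_subset_iff)
    finally show "\<rho> (c j0) x \<le> \<rho> (c j') x" .
  qed
  hence P: "i \<in> {1..k} \<and> (\<forall>j'\<in>{1..k}. \<rho> (c i) x \<le> \<rho> (c j') x)"
    unfolding iL using j0 by (rule_tac LeastI[of _ j0]) auto
  thus "i \<in> {1..k}" by simp
  have "dist_set \<rho> x (c ` {1..k}) \<le> \<rho> x (c i)" using ds_le[OF fin] P by auto
  moreover have "\<rho> x (c i) \<le> dist_set \<rho> x (c ` {1..k})"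
  proof -
    have ci: "c i \<in> X" "c j0 \<in> X" using P j0 cX by auto
    have "\<rho> x (c i) = \<rho> (c i) x" using sym[OF xX ci(1)] .
    also have "\<dots> \<le> \<rho> (c j0) x" using P j0 by auto
    also have "\<dots> = \<rho> x (c j0)" using sym[OF ci(2) xX] .
    finally show ?thesis using y j0 by simp
  qed
  ultimately show "dist_set \<rho> x (c ` {1..k}) = \<rho> x (c i)" by simp
qed

theorem lemma12:
  fixes X :: "'a set" and \<rho> :: "'a \<Rightarrow> 'a \<Rightarrow> real" and n k :: nat and \<delta> \<alpha> :: real
    and c :: "nat \<Rightarrow> 'a" and P1 T :: "'a set" and L :: nat and B :: "nat \<Rightarrow> 'a set"
  assumes metric: "finite_metric X \<rho>"
    and n_def: "card X = n"
    and k: "k \<ge> 2"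
    and \<delta>: "0 < \<delta>" "\<delta> < 1"
    and opt: "is_opt X \<rho> k c"
    and \<alpha>: "0 < \<alpha>" "\<alpha> \<le> 1 / 6"
    and \<alpha>n_int: "\<alpha> * real n \<in> \<int>"
    and P1: "P1 \<subseteq> X" "real (card P1) = \<alpha> * real n"
    and T: "T \<subseteq> X" "T \<noteq> {}"
    and bins: "linear_bin_division \<rho> (phi k \<delta> \<alpha> / 15) X (c ` {1..k}) L B"
    and n_ge: "real n \<ge> phi k \<delta> \<alpha> / 15"
    and bins_rep: "well_rep_bins X P1 L B"
    and clusters_rep: "\<forall>i\<in>{1..k}. real (card (opt_cluster X \<rho> k c i)) \<ge> phi k \<delta> \<alpha>
                         \<longrightarrow> well_rep X P1 (opt_cluster X \<rho> k c i)"
  shows "Rcost \<rho> (X_large X \<rho> k c \<delta> \<alpha>) T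
         \<le> Rcost \<rho> (X_large X \<rho> k c \<delta> \<alpha>) (c ` {1..k})
           + 4 / \<alpha> * (Rcost \<rho> (P1 - B 1) (c ` {1..k}) + Rcost \<rho> P1 T)"
proof -
  define Opt where "Opt = c ` {1..k}"
  define C where "C = opt_cluster X \<rho> k c"
  define \<phi> where "\<phi> = phi k \<delta> \<alpha>"
  define I where "I = {i \<in> {1..k}. real (card (C i)) \<ge> \<phi>}"
  define S where "S i = C i \<inter> (P1 - B 1)" for i
  have finX: "finite X" using metric finite_metric_def by blast
  have OX: "Opt \<subseteq> X" using opt unfolding is_opt_def Opt_def by auto
  have One: "Opt \<noteq> {}" using k Opt_def by auto
  have CX: "C i \<subseteq> X" for i unfolding C_def opt_cluster_def by auto
  have finC: "finite (C i)" for i using CX finX finite_subset by metis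
  have phipos: "\<phi> > 0"
  proof -
    have "32 * real k / \<delta> > 1" using k \<delta> by (simp add: field_simps)
    hence "ln (32 * real k / \<delta>) > 0" by simp
    thus ?thesis unfolding \<phi>_def phi_def using \<alpha> by simp
  qed
  have Xlarge: "X_large X \<rho> k c \<delta> \<alpha> = (\<Union>i\<in>I. C i)"
    unfolding X_large_def I_def C_def \<phi>_def by auto
  have disj: "C i \<inter> C j = {}" if "i \<noteq> j" for i j
    using that unfolding C_def opt_cluster_def by auto
  have L1: "L \<ge> 1" and B1X: "B 1 \<subseteq> X" and B1ne: "B 1 \<noteq> {}"
    and B1card: "real (card (B 1)) \<le> 5/2 * (\<phi>/15)"
    using bins unfolding linear_bin_division_def \<phi>_def by auto
  have finB1: "finite (B 1)" using B1X finX finite_subset by metis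
  have B1pos: "card (B 1) > 0" using finB1 B1ne by (simp add: card_gt_0_iff)
  have npos: "n > 0" using B1X B1ne finX n_def by (metis card_gt_0_iff subset_empty)
  have r: "real (card P1) / real (card X) = \<alpha>" using P1 n_def npos by simp
  have B1P: "real (card (B 1 \<inter> P1)) \<le> 3/2 * \<alpha> * real (card (B 1))"
  proof -
    have "well_rep X P1 (B 1)" using bins_rep L1 unfolding well_rep_bins_def by auto
    hence "real (card (B 1 \<inter> P1)) / real (card (B 1)) \<le> 3/2 * \<alpha>"
      unfolding well_rep_def Let_def r by simp
    thus ?thesis using B1pos by (simp add: divide_le_eq mult.commute)
  qed
  have CP: "real (card (C i \<inter> P1)) \<ge> \<alpha>/2 * real (card (C i))" if "i \<in> I" for i
  proof -
    have ci: "real (card (C i)) > 0" using that phipos unfolding I_def by auto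
    have "well_rep X P1 (C i)" using clusters_rep that unfolding I_def C_def \<phi>_def by auto
    hence "\<alpha>/2 \<le> real (card (C i \<inter> P1)) / real (card (C i))"
      unfolding well_rep_def Let_def r by simp
    thus ?thesis using ci by (simp add: le_divide_eq mult.commute)
  qed
  have Sbig: "real (card (S i)) \<ge> \<alpha>/4 * real (card (C i))" if "i \<in> I" for i
  proof -
    have "C i \<inter> P1 \<subseteq> S i \<union> (B 1 \<inter> P1)" unfolding S_def by auto
    hence "card (C i \<inter> P1) \<le> card (S i \<union> (B 1 \<inter> P1))"
      by (rule card_mono[rotated]) (use finC finB1 S_def in auto)
    also have "\<dots> \<le> card (S i) + card (B 1 \<inter> P1)" by (rule card_Un_le)
    finally have a: "real (card (C i \<inter> P1)) \<le> real (card (S i)) + real (card (B 1 \<inter> P1))"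
      by linarith
    have b: "\<alpha> * real (card (B 1)) \<le> \<alpha> * (\<phi>/6)"
      using B1card \<alpha> by (intro mult_left_mono) auto
    have c: "\<alpha> * \<phi> \<le> \<alpha> * real (card (C i))"
      using that \<alpha> unfolding I_def by (intro mult_left_mono) auto
    show ?thesis using a b c CP[OF that] B1P by linarith
  qed
  have key: "Rcost \<rho> (C i) T \<le> Rcost \<rho> (C i) Opt + 4/\<alpha> * (Rcost \<rho> (S i) Opt + Rcost \<rho> (S i) T)"
    if iI: "i \<in> I" for i
  proof -
    let ?d = "dist_set \<rho> (c i) T"
    have ik: "i \<in> {1..k}" using iI I_def by auto
    have ciX: "c i \<in> X" using ik OX Opt_def by auto
    have cX: "c ` {1..k} \<subseteq> X" using OX Opt_def by auto
    have k1: "k \<ge> 1" using k by simp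
    have d0: "?d \<ge> 0" using ds_nonneg[OF metric ciX T] .
    have "Rcost \<rho> (C i) T \<le> (\<Sum>x\<in>C i. dist_set \<rho> x Opt + ?d)"
      unfolding Rcost_def
    proof (rule sum_mono)
      fix x assume x: "x \<in> C i"
      have xX: "x \<in> X" using x CX by auto
      have "dist_set \<rho> x T \<le> \<rho> x (c i) + ?d" using ds_tri[OF metric xX ciX T] .
      also have "\<rho> x (c i) = dist_set \<rho> x Opt"
        using cluster_ds(1)[OF metric cX k1, of x i] x unfolding C_def Opt_def by simp
      finally show "dist_set \<rho> x T \<le> dist_set \<rho> x Opt + ?d" .
    qed
    also have "\<dots> = Rcost \<rho> (C i) Opt + real (card (C i)) * ?d"
      unfolding Rcost_def by (simp add: sum.distrib)
    finally have 1: "Rcost \<rho> (C i) T \<le> Rcost \<rho> (C i) Opt + real (card (C i)) * ?d" .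
    have "real (card (S i)) * ?d = (\<Sum>y\<in>S i. ?d)" by simp
    also have "\<dots> \<le> (\<Sum>y\<in>S i. dist_set \<rho> y Opt + dist_set \<rho> y T)"
    proof (rule sum_mono)
      fix y assume y: "y \<in> S i"
      have yC: "y \<in> C i" using y S_def by auto
      have yX: "y \<in> X" using yC CX by auto
      have "?d \<le> \<rho> (c i) y + dist_set \<rho> y T" using ds_tri[OF metric ciX yX T] .
      also have "\<rho> (c i) y = \<rho> y (c i)" using metric ciX yX unfolding finite_metric_def by blast
      also have "\<rho> y (c i) = dist_set \<rho> y Opt"
        using cluster_ds(1)[OF metric cX k1, of y i] yC unfolding C_def Opt_def by simp
      finally show "?d \<le> dist_set \<rho> y Opt + dist_set \<rho> y T" .
    qed
    also have "\<dots> = Rcost \<rho> (S i) Opt + Rcost \<rho> (S i) T"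
      unfolding Rcost_def by (simp add: sum.distrib)
    finally have 2: "real (card (S i)) * ?d \<le> Rcost \<rho> (S i) Opt + Rcost \<rho> (S i) T" .
    have cs: "real (card (C i)) \<le> 4/\<alpha> * real (card (S i))"
      using Sbig[OF iI] \<alpha> by (simp add: field_simps)
    have "real (card (C i)) * ?d \<le> (4/\<alpha> * real (card (S i))) * ?d"
      using cs d0 by (rule mult_right_mono)
    also have "\<dots> = 4/\<alpha> * (real (card (S i)) * ?d)" by simp
    also have "\<dots> \<le> 4/\<alpha> * (Rcost \<rho> (S i) Opt + Rcost \<rho> (S i) T)"
      using 2 \<alpha> by (intro mult_left_mono) auto
    finally show ?thesis using 1 by linarith
  qed
  have finI: "finite I" unfolding I_def by simp
  have disjI: "\<forall>i\<in>I. \<forall>j\<in>I. i \<noteq> j \<longrightarrow> C i \<inter> C j = {}" using disj by blast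
  have sumC: "Rcost \<rho> (\<Union>i\<in>I. C i) U = (\<Sum>i\<in>I. Rcost \<rho> (C i) U)" for U
    unfolding Rcost_def using sum.UNION_disjoint[OF finI _ disjI] finC by blast
  have finS: "finite (S i)" for i using finC S_def by auto
  have disjS: "\<forall>i\<in>I. \<forall>j\<in>I. i \<noteq> j \<longrightarrow> S i \<inter> S j = {}" using disj S_def by blast
  have sumS: "(\<Sum>i\<in>I. Rcost \<rho> (S i) U) = Rcost \<rho> (\<Union>i\<in>I. S i) U" for U
    unfolding Rcost_def using sum.UNION_disjoint[OF finI _ disjS] finS by metis
  have finP: "finite P1" using P1 finX finite_subset by metis
  have SO: "(\<Sum>i\<in>I. Rcost \<rho> (S i) Opt) \<le> Rcost \<rho> (P1 - B 1) Opt"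
    unfolding sumS unfolding Rcost_def
    by (rule sum_mono2) (use finP S_def ds_nonneg[OF metric _ OX One] P1 in auto)
  have ST: "(\<Sum>i\<in>I. Rcost \<rho> (S i) T) \<le> Rcost \<rho> P1 T"
    unfolding sumS unfolding Rcost_def
    by (rule sum_mono2) (use finP S_def ds_nonneg[OF metric _ T] P1 in auto)
  have "Rcost \<rho> (\<Union>i\<in>I. C i) T \<le> (\<Sum>i\<in>I. Rcost \<rho> (C i) Opt + 4/\<alpha> * (Rcost \<rho> (S i) Opt + Rcost \<rho> (S i) T))"
    unfolding sumC by (rule sum_mono) (rule key)
  also have "\<dots> = Rcost \<rho> (\<Union>i\<in>I. C i) Opt + 4/\<alpha> * ((\<Sum>i\<in>I. Rcost \<rho> (S i) Opt) + (\<Sum>i\<in>I. Rcost \<rho> (S i) T))"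
    unfolding sumC by (simp only: sum.distrib sum_distrib_left[symmetric])
  also have "\<dots> \<le> Rcost \<rho> (\<Union>i\<in>I. C i) Opt + 4/\<alpha> * (Rcost \<rho> (P1 - B 1) Opt + Rcost \<rho> P1 T)"
    using SO ST \<alpha> by (intro add_left_mono mult_left_mono) auto
  finally show ?thesis unfolding Xlarge Opt_def .
qed

end
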